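(* Let $\lambda>0$, $p\in\mathbb{N}$, and let $f\in C^p\left[0,\frac12\lambda^{-1/2}\right]$ be complex-valued with $f(0)=0$ and $\max_{[0,\frac12\lambda^{-1/2}]}|f^{(p)}|\le C(p)\,\lambda^{\frac p2+1}$ for some constant $C(p)>0$. Then for all $\varphi_0,\varphi_1\in\mathbb{R}$, $$\int_0^{\frac12\lambda^{-1/2}}\left|f(t)-e^{i\varphi_1t+i\varphi_0}\right|^2dt\ \ge\ \frac{\lambda^{-1/2}}{9}\min\left\{4^{-p-\frac52},\ 4^{-\frac{p+3}{2}}\,6^{\frac1p}\,C(p)^{-\frac1p}\,\lambda^{-\frac1p}\right\}.$$ *)

theory Defs
  imports "HOL-Analysis.Analysis"
begin

end

theory Submission
  imports Defs
begin

lemma alt_sum_pow: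
  "i < N \<Longrightarrow> (\<Sum>k\<le>N. (-1)^k * real (N choose k) * real k ^ i) = 0"
proof (induction N arbitrary: i)
  case 0 then show ?case by simp
next
  case (Suc n)
  show ?case
  proof (cases i)
    case 0
    then show ?thesis using choose_alternating_sum[of "Suc n", where 'a=real] by simp
  next
    case (Suc i')
    have ih: "\<And>r. r \<le> i' \<Longrightarrow> (\<Sum>k\<le>n. (-1)^k * real (n choose k) * real k ^ r) = 0"
      using Suc.IH Suc.prems \<open>i = Suc i'\<close> by simp
    have "(\<Sum>k\<le>Suc n. (-1)^k * real (Suc n choose k) * real k ^ i)
        = (\<Sum>k\<le>n. (-1)^(Suc k) * real (Suc n choose Suc k) * real (Suc k) ^ i)"
      by (subst sum.atMost_Suc_shift) (simp add: \<open>i = Suc i'\<close>)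
    also have "\<dots> = (\<Sum>k\<le>n. (-1)^(Suc k) * (real (Suc n) * real (n choose k)) * real (Suc k) ^ i')"
    proof (rule sum.cong[OF refl])
      fix k assume "k \<in> {..n}"
      have eq: "real (Suc n choose Suc k) * real (Suc k) = real (Suc n) * real (n choose k)"
        by (metis Suc_times_binomial_eq of_nat_mult)
      then show "(-1)^(Suc k) * real (Suc n choose Suc k) * real (Suc k) ^ i =
          (-1)^(Suc k) * (real (Suc n) * real (n choose k)) * real (Suc k) ^ i'"
      proof -
        have "(-1)^(Suc k) * real (Suc n choose Suc k) * real (Suc k) ^ i
            = (-1)^(Suc k) * (real (Suc n choose Suc k) * real (Suc k)) * real (Suc k) ^ i'"
          unfolding \<open>i = Suc i'\<close> power_Suc by (simp only: mult.assoc)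
        then show ?thesis unfolding eq .
      qed
    qed
    also have "\<dots> = - real (Suc n) * (\<Sum>k\<le>n. (-1)^k * real (n choose k) * (real k + 1) ^ i')"
      by (simp add: sum_distrib_left algebra_simps)
    also have "(\<Sum>k\<le>n. (-1)^k * real (n choose k) * (real k + 1) ^ i')
        = (\<Sum>k\<le>n. \<Sum>r\<le>i'. real (i' choose r) * ((-1)^k * real (n choose k) * real k ^ r))"
    proof (rule sum.cong[OF refl])
      fix k assume "k \<in> {..n}"
      have "(real k + 1) ^ i' = (\<Sum>r\<le>i'. real (i' choose r) * real k ^ r)"
        using binomial_ring[of "real k" 1 i'] by (simp add: mult.commute)
      then show "(-1)^k * real (n choose k) * (real k + 1) ^ i' =
          (\<Sum>r\<le>i'. real (i' choose r) * ((-1)^k * real (n choose k) * real k ^ r))"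
        by (simp add: sum_distrib_left algebra_simps)
    qed
    also have "\<dots> = (\<Sum>r\<le>i'. real (i' choose r) * (\<Sum>k\<le>n. (-1)^k * real (n choose k) * real k ^ r))"
      by (subst sum.swap) (simp add: sum_distrib_left)
    also have "\<dots> = 0" using ih by simp
    finally show ?thesis by simp
  qed
qed

lemma central_pow:
  assumes "i < p"
  shows "(\<Sum>k\<le>2*p. (-1)^k * real (2*p choose k) * (real k - real p) ^ (2*i)) = 0"
proof -
  have "(\<Sum>k\<le>2*p. (-1)^k * real (2*p choose k) * (real k - real p) ^ (2*i))
      = (\<Sum>k\<le>2*p. \<Sum>r\<le>2*i. real (2*i choose r) * (- real p) ^ (2*i - r) *
            ((-1)^k * real (2*p choose k) * real k ^ r))"
  proof (rule sum.cong[OF refl])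
    fix k assume "k \<in> {..2*p}"
    have "(real k - real p) ^ (2*i) = (\<Sum>r\<le>2*i. real (2*i choose r) * real k ^ r * (- real p) ^ (2*i - r))"
      using binomial_ring[of "real k" "- real p" "2*i"] by simp
    then show "(-1)^k * real (2*p choose k) * (real k - real p) ^ (2*i) =
       (\<Sum>r\<le>2*i. real (2*i choose r) * (- real p) ^ (2*i - r) *
            ((-1)^k * real (2*p choose k) * real k ^ r))"
      by (simp add: sum_distrib_left algebra_simps)
  qed
  also have "\<dots> = (\<Sum>r\<le>2*i. real (2*i choose r) * (- real p) ^ (2*i - r) *
            (\<Sum>k\<le>2*p. (-1)^k * real (2*p choose k) * real k ^ r))"
    by (subst sum.swap) (simp add: sum_distrib_left)
  also have "\<dots> = 0"
    using assms by (intro sum.neutral) (auto simp: alt_sum_pow)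
  finally show ?thesis .
qed

lemma sum_center:
  fixes F :: "nat \<Rightarrow> 'a::comm_monoid_add"
  shows "(\<Sum>k\<le>2*p. F k) = F p + (\<Sum>j=1..p. F (p - j) + F (p + j))"
proof -
  have split: "{..2*p} = {..<p} \<union> ({p} \<union> {p+1..p+p})" by auto
  have "(\<Sum>k\<le>2*p. F k) = (\<Sum>k<p. F k) + (F p + (\<Sum>k=p+1..p+p. F k))"
    unfolding split by (subst sum.union_disjoint; auto)+
  moreover have "(\<Sum>k<p. F k) = (\<Sum>j=1..p. F (p - j))"
    by (rule sum.reindex_bij_witness[of _ "\<lambda>k. p - k" "\<lambda>k. p - k"]) auto
  moreover have "(\<Sum>k=p+1..p+p. F k) = (\<Sum>j=1..p. F (p + j))"
    by (rule sum.reindex_bij_witness[of _ "\<lambda>k. p + k" "\<lambda>k. k - p"]) auto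
  ultimately show ?thesis by (simp add: sum.distrib algebra_simps)
qed

lemma quad_node_identity:
  fixes d :: "nat \<Rightarrow> complex" and y :: real and p :: nat
  defines "T \<equiv> \<lambda>t::real. \<Sum>i<p. (t ^ i) *\<^sub>R d i"
  shows "of_nat (2*p choose p) * T 0 +
     2 * (\<Sum>j=1..p. (-1)^j * of_nat (2*p choose (p - j)) * T (y * real j ^ 2)) = 0"
proof -
  define Q where "Q = (\<lambda>u::real. T (y * u))"
  have "(\<Sum>k\<le>2*p. (-1)^k * of_nat (2*p choose k) * Q ((real k - real p) ^ 2)) = (0::complex)"
  proof -
    have "(\<Sum>k\<le>2*p. (-1)^k * of_nat (2*p choose k) * Q ((real k - real p) ^ 2))
       = (\<Sum>k\<le>2*p. \<Sum>i<p. of_real (y ^ i * ((-1)^k * real (2*p choose k) * (real k - real p) ^ (2*i))) * d i)"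
    proof (intro sum.cong refl)
      fix k assume "k \<in> {..2*p}"
      have e: "\<And>i. (y * (real k - real p)^2) ^ i = y ^ i * (real k - real p) ^ (2*i)"
        by (simp add: power_mult_distrib power_mult)
      show "(-1)^k * of_nat (2*p choose k) * Q ((real k - real p) ^ 2) =
        (\<Sum>i<p. of_real (y ^ i * ((-1)^k * real (2*p choose k) * (real k - real p) ^ (2*i))) * d i)"
        unfolding Q_def T_def e by (simp add: sum_distrib_left scaleR_conv_of_real algebra_simps)
    qed
    also have "\<dots> = (\<Sum>i<p. of_real (y ^ i * (\<Sum>k\<le>2*p. (-1)^k * real (2*p choose k) * (real k - real p) ^ (2*i))) * d i)"
      by (subst sum.swap) (simp add: sum_distrib_left sum_distrib_right)
    also have "\<dots> = 0" by (simp add: central_pow)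
    finally show ?thesis .
  qed
  also have "(\<Sum>k\<le>2*p. (-1)^k * of_nat (2*p choose k) * Q ((real k - real p) ^ 2))
      = (-1)^p * (of_nat (2*p choose p) * Q 0 +
          2 * (\<Sum>j=1..p. (-1)^j * of_nat (2*p choose (p - j)) * Q (real j ^ 2)))"
  proof -
    have "(\<Sum>k\<le>2*p. (-1)^k * of_nat (2*p choose k) * Q ((real k - real p) ^ 2))
       = (-1)^p * of_nat (2*p choose p) * Q 0 + (\<Sum>j=1..p.
          (-1)^(p-j) * of_nat (2*p choose (p-j)) * Q ((real (p-j) - real p) ^ 2) +
          (-1)^(p+j) * of_nat (2*p choose (p+j)) * Q ((real (p+j) - real p) ^ 2))"
      by (subst sum_center) simp
    also have "\<dots> = (-1)^p * of_nat (2*p choose p) * Q 0 + (\<Sum>j=1..p.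
          (-1)^p * (2 * ((-1)^j * of_nat (2*p choose (p - j)) * Q (real j ^ 2))))"
    proof (intro arg_cong2[where f="(+)"] refl sum.cong)
      fix j assume j: "j \<in> {1..p}"
      have 1: "(real (p-j) - real p) ^ 2 = real j ^ 2" "(real (p+j) - real p) ^ 2 = real j ^ 2"
        using j by (auto simp: of_nat_diff power2_eq_square algebra_simps)
      have 2: "(2*p choose (p+j)) = (2*p choose (p-j))"
        using j binomial_symmetric[of "p+j" "2*p"] by (simp add: numeral_2_eq_2)
      have 3: "(-1::complex)^(p-j) = (-1)^p * (-1)^j" "(-1::complex)^(p+j) = (-1)^p * (-1)^j"
      proof -
        have "(-1::complex)^(p-j) * (-1)^j = (-1)^p" using j by (simp add: power_add[symmetric])
        then show "(-1::complex)^(p-j) = (-1)^p * (-1)^j"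
          by (metis mult.assoc mult.right_neutral power_minus1_even power_mult_distrib semiring_norm(2)
              mult_minus1 power2_eq_square power_one)
        show "(-1::complex)^(p+j) = (-1)^p * (-1)^j" by (simp add: power_add)
      qed
      show "(-1)^(p-j) * of_nat (2*p choose (p-j)) * Q ((real (p-j) - real p) ^ 2) +
          (-1)^(p+j) * of_nat (2*p choose (p+j)) * Q ((real (p+j) - real p) ^ 2) =
          (-1)^p * (2 * ((-1)^j * of_nat (2*p choose (p - j)) * Q (real j ^ 2)))"
        unfolding 1 2 3 by (simp add: algebra_simps)
    qed
    finally show ?thesis by (simp add: sum_distrib_left algebra_simps)
  qed
  finally show ?thesis by (simp add: Q_def)
qed

lemma central_weight:
  assumes "j \<le> p"
  shows "(2*p choose (p - j)) * (p + j) \<le> p * (2*p choose p)"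
  using assms
proof (induction j)
  case 0 then show ?case by simp
next
  case (Suc j)
  have key: "(2*p choose (p - Suc j)) * (p + Suc j) = (2*p choose (p - j)) * (p - j)"
  proof -
    define k where "k = p - Suc j"
    have k1: "p - j = Suc k" "2*p - k = p + Suc j" using Suc.prems by (auto simp: k_def)
    have "(2*p - k) * (2*p choose k) = 2*p * ((2*p - 1) choose k)" by (rule binomial_absorb_comp)
    moreover have "Suc k * (2*p choose Suc k) = 2*p * ((2*p - 1) choose k)"
      using times_binomial_minus1_eq[of "Suc k" "2*p"] by simp
    ultimately show ?thesis unfolding k1 k_def[symmetric] by (simp add: mult.commute)
  qed
  have "(2*p choose (p - j)) * (p - j) \<le> (2*p choose (p - j)) * (p + j)" by (intro mult_left_mono) auto
  also have "\<dots> \<le> p * (2*p choose p)" using Suc by simp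
  finally show ?case using key by simp
qed

lemma integral_sq_bound:
  fixes h :: "real \<Rightarrow> real"
  assumes cont: "continuous_on {a..b} h" and ab: "a < b"
  shows "(integral {a..b} h)^2 \<le> (b - a) * integral {a..b} (\<lambda>t. (h t)^2)"
proof -
  define m where "m = integral {a..b} h / (b - a)"
  have ih: "(h has_integral integral {a..b} h) {a..b}"
    using cont integrable_continuous_real by blast
  have ih2: "((\<lambda>t. (h t)^2) has_integral integral {a..b} (\<lambda>t. (h t)^2)) {a..b}"
    using cont by (intro integrable_integral integrable_continuous_real continuous_intros)
  have "((\<lambda>t. (h t)^2 - 2 * m * h t + m^2) has_integral
      (integral {a..b} (\<lambda>t. (h t)^2) - 2 * m * integral {a..b} h + m^2 * (b - a))) {a..b}"
    using ab by (intro has_integral_add has_integral_diff has_integral_mult_right ih ih2)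
      (use has_integral_const_real[of "m^2" a b] in \<open>auto simp: mult.commute\<close>)
  moreover have "((\<lambda>t. (h t)^2 - 2 * m * h t + m^2)) = (\<lambda>t. (h t - m)^2)"
    by (auto simp: power2_eq_square algebra_simps)
  ultimately have "0 \<le> integral {a..b} (\<lambda>t. (h t)^2) - 2 * m * integral {a..b} h + m^2 * (b - a)"
    by (metis (no_types, lifting) has_integral_nonneg zero_le_power2)
  moreover have "integral {a..b} (\<lambda>t. (h t)^2) - 2 * m * integral {a..b} h + m^2 * (b - a)
      = integral {a..b} (\<lambda>t. (h t)^2) - (integral {a..b} h)^2 / (b - a)"
  proof -
    define w where "w = b - a"
    define J where "J = integral {a..b} h"
    have w: "w \<noteq> 0" using ab by (simp add: w_def)
    have "2 * (J / w) * J - (J / w)^2 * w = J^2 / w"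
      using w by (simp add: power2_eq_square field_simps)
    then show ?thesis unfolding m_def J_def[symmetric] w_def[symmetric] by simp
  qed
  ultimately have "(integral {a..b} h)^2 / (b - a) \<le> integral {a..b} (\<lambda>t. (h t)^2)" by simp
  then show ?thesis using ab by (simp add: divide_le_eq mult.commute)
qed

lemma integral_sqrt_bound:
  fixes h :: "real \<Rightarrow> real"
  assumes cont: "continuous_on {a..b} h" and ab: "a < b"
  shows "integral {a..b} h \<le> sqrt ((b - a) * integral {a..b} (\<lambda>t. (h t)^2))"
  using integral_sq_bound[OF assms] real_le_rsqrt by blast

lemma integral_scale01:
  fixes h :: "real \<Rightarrow> real"
  assumes cont: "continuous_on {0..x} h" and x: "x > 0"
  shows "integral {0..1} (\<lambda>s. h (s * x)) = integral {0..x} h / x"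
proof -
  have "((\<lambda>s. x *\<^sub>R h (s * x)) has_integral integral {0 * x..1 * x} h) {0..1}"
    using x cont
    by (intro has_integral_substitution[where c=0 and d=x])
       (auto intro!: derivative_eq_intros mult_le_one simp: mult_nonneg_nonneg)
  then have "((\<lambda>s. (1 / x) *\<^sub>R (x *\<^sub>R h (s * x))) has_integral (1 / x) *\<^sub>R integral {0..x} h) {0..1}"
    by (intro has_integral_cmul) simp
  moreover have "(\<lambda>s. (1 / x) *\<^sub>R (x *\<^sub>R h (s * x))) = (\<lambda>s. h (s * x))" using x by auto
  ultimately have "((\<lambda>s. h (s * x)) has_integral integral {0..x} h / x) {0..1}" by simp
  then show ?thesis by (rule integral_unique)
qed

lemma vec_mvt_bound:
  fixes u :: "real \<Rightarrow> 'a::banach"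
  assumes ab: "a \<le> b"
    and der: "\<And>t. t \<in> {a..b} \<Longrightarrow> (u has_vector_derivative u' t) (at t within {a..b})"
    and bnd: "\<And>t. t \<in> {a..b} \<Longrightarrow> norm (u' t) \<le> B"
  shows "norm (u b - u a) \<le> B * (b - a)"
proof -
  have "(u' has_integral (u b - u a)) {a..b}"
    using fundamental_theorem_of_calculus[OF ab der] .
  moreover have "0 \<le> B" using bnd[of a] ab norm_ge_zero order_trans by (meson atLeastAtMost_iff order_refl)
  ultimately show ?thesis
    using has_integral_bound[where a=a and b=b and f=u', unfolded cbox_interval] bnd ab
    by (metis content_real atLeastAtMost_iff)
qed

lemma taylor_bound:
  fixes Dg :: "nat \<Rightarrow> real \<Rightarrow> 'a::banach"
  assumes p: "p > 0" and t: "0 \<le> t" "t \<le> D"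
    and der: "\<And>m x. m < p \<Longrightarrow> x \<in> {0..D} \<Longrightarrow>
        (Dg m has_vector_derivative Dg (Suc m) x) (at x within {0..D})"
    and bnd: "\<And>x. x \<in> {0..D} \<Longrightarrow> norm (Dg p x) \<le> M"
  shows "norm (Dg 0 t - (\<Sum>i<p. (t ^ i / fact i) *\<^sub>R Dg i 0)) \<le> M * t ^ p / fact p"
proof -
  have der': "\<And>m x. m < p \<Longrightarrow> 0 \<le> x \<Longrightarrow> x \<le> t \<Longrightarrow>
        (Dg m has_vector_derivative Dg (Suc m) x) (at x within {0..t})"
    by (rule has_vector_derivative_within_subset[OF der]) (use t in auto)
  define i where "i = (\<lambda>x. ((t - x) ^ (p - 1) / fact (p - 1)) *\<^sub>R Dg p x)"
  have tay: "Dg 0 t = (\<Sum>i<p. ((t - 0) ^ i / fact i) *\<^sub>R Dg i 0) + integral {0..t} i"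
    using Taylor_integral[of p Dg "Dg 0" 0 t, OF p refl der' t(1)] unfolding i_def by simp
  have iint: "i integrable_on {0..t}"
    using Taylor_integrable[of p Dg "Dg 0" 0 t, OF p refl der' t(1)] unfolding i_def by simp
  have gint: "((\<lambda>x. M * ((t - x) ^ (p - 1) / fact (p - 1))) has_integral (M * t ^ p / fact p)) {0..t}"
  proof -
    have "((\<lambda>x. M * ((t - x) ^ (p - 1) / fact (p - 1))) has_integral
        ((- M * (t - t) ^ p / fact p) - (- M * (t - 0) ^ p / fact p))) {0..t}"
    proof (rule fundamental_theorem_of_calculus[OF t(1)])
      fix x assume "x \<in> {0..t}"
      have "fact p = real p * fact (p - 1)"
        using p by (metis fact_nonzero fact_num_eq_if of_nat_eq_0_iff not_gr_zero)
      moreover have "(t - x) ^ p = (t - x) * (t - x) ^ (p - 1)"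
        using p by (metis power_eq_if not_gr_zero)
      ultimately show "((\<lambda>x. - M * (t - x) ^ p / fact p) has_vector_derivative
          M * ((t - x) ^ (p - 1) / fact (p - 1))) (at x within {0..t})"
        using p unfolding has_vector_derivative_def[symmetric]
        by (auto intro!: derivative_eq_intros simp: has_real_derivative_iff_has_vector_derivative[symmetric]
            field_simps)
    qed
    then show ?thesis using p by (simp add: zero_power)
  qed
  have "norm (integral {0..t} i) \<le> integral {0..t} (\<lambda>x. M * ((t - x) ^ (p - 1) / fact (p - 1)))"
  proof (rule integral_norm_bound_integral[OF iint])
    show "(\<lambda>x. M * ((t - x) ^ (p - 1) / fact (p - 1))) integrable_on {0..t}"
      using gint by blast
    fix x assume x: "x \<in> {0..t}"
    then have "x \<in> {0..D}" using t by auto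
    then have "norm (Dg p x) \<le> M" by (rule bnd)
    moreover have "0 \<le> (t - x) ^ (p - 1) / fact (p - 1)" using x by auto
    ultimately show "norm (i x) \<le> M * ((t - x) ^ (p - 1) / fact (p - 1))"
    proof -
      have "norm (i x) = norm (Dg p x) * ((t - x) ^ (p - 1) / fact (p - 1))"
        unfolding i_def using x by (simp add: abs_of_nonneg)
      also have "\<dots> \<le> M * ((t - x) ^ (p - 1) / fact (p - 1))"
        by (rule mult_right_mono) fact+
      finally show ?thesis .
    qed
  qed
  also have "\<dots> = M * t ^ p / fact p" using gint by (rule integral_unique)
  finally show ?thesis using tay by simp
qed

definition aG :: "nat \<Rightarrow> real" where
  "aG p = 2 * (\<Sum>j=1..p. real p ^ 2 / (real j * (real p + real j)))"

definition bG :: "nat \<Rightarrow> real" where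
  "bG p = 2 * (\<Sum>j=1..p. (real p / (real p + real j)) * (real j / real p) ^ (2*p)) / fact (p + 1)"

lemma weight_real:
  assumes "j \<le> p" "0 < p"
  shows "2 * real (2*p choose (p - j)) / real (2*p choose p) \<le> 2 * real p / (real p + real j)"
proof -
  have "real (2*p choose (p - j)) * (real p + real j) \<le> real p * real (2*p choose p)"
    using central_weight[OF assms(1)] by (metis of_nat_add of_nat_le_iff of_nat_mult)
  moreover have "real (2*p choose p) > 0" by simp
  moreover have "real p + real j > 0" using assms by simp
  ultimately show ?thesis by (simp add: field_simps)
qed

lemma routeG:
  fixes Dg :: "nat \<Rightarrow> real \<Rightarrow> complex" and p :: nat and D M :: real
  assumes p: "p > 0" and D: "D > 0"
    and der: "\<And>m x. m < p \<Longrightarrow> x \<in> {0..D} \<Longrightarrow>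
        (Dg m has_vector_derivative Dg (Suc m) x) (at x within {0..D})"
    and bnd: "\<And>x. x \<in> {0..D} \<Longrightarrow> norm (Dg p x) \<le> M"
    and g0: "norm (Dg 0 0) = 1"
  shows "1 \<le> aG p * sqrt (integral {0..D} (\<lambda>t. (norm (Dg 0 t))^2) / D) + bG p * M * D ^ p"
proof -
  define I where "I = integral {0..D} (\<lambda>t. (norm (Dg 0 t))^2)"
  define x where "x = (\<lambda>j::nat. D * (real j / real p)^2)"
  define c where "c = (\<lambda>j::nat. 2 * real (2*p choose (p - j)) / real (2*p choose p))"
  define Tp where "Tp = (\<lambda>t::real. \<Sum>i<p. (t ^ i) *\<^sub>R ((1 / fact i) *\<^sub>R Dg i 0))"
  have M0: "0 \<le> M" using bnd[of 0] D by (meson atLeastAtMost_iff less_imp_le norm_ge_zero order_trans order_refl)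
  have cont: "continuous_on {0..D} (Dg 0)"
  proof -
    have "\<And>x. x \<in> {0..D} \<Longrightarrow> (Dg 0 has_vector_derivative Dg (Suc 0) x) (at x within {0..D})"
      using der p by blast
    then show ?thesis
      by (meson continuous_on_eq_continuous_within has_vector_derivative_continuous)
  qed
  have xpos: "x j > 0" if "j \<in> {1..p}" for j using that D p by (simp add: x_def)
  have xle: "x j \<le> D" if "j \<in> {1..p}" for j
  proof -
    have "(real j / real p)^2 \<le> 1" using that p by (simp add: power_le_one)
    then show ?thesis using D by (simp add: x_def mult_left_le)
  qed
  have c0: "c j \<ge> 0" for j by (simp add: c_def)
  have cle: "c j \<le> 2 * real p / (real p + real j)" if "j \<in> {1..p}" for j
    using weight_real[of j p] that p by (simp add: c_def)
  have Tp0: "Tp 0 = Dg 0 0"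
  proof -
    have "Tp 0 = (\<Sum>i<p. (if i = 0 then Dg 0 0 else 0))"
      unfolding Tp_def by (intro sum.cong refl) (auto simp: zero_power)
    also have "\<dots> = Dg 0 0" using p by (simp add: sum.delta')
    finally show ?thesis .
  qed
  have pw: "1 \<le> (\<Sum>j=1..p. c j * norm (Dg 0 (s * x j))) + (\<Sum>j=1..p. c j * (M * (s * x j) ^ p / fact p))"
    if s: "s \<in> {0..1}" for s
  proof -
    have id: "of_nat (2*p choose p) * Tp 0 +
        2 * (\<Sum>j=1..p. (-1)^j * of_nat (2*p choose (p - j)) * Tp ((s * D / real p ^ 2) * real j ^ 2)) = 0"
      unfolding Tp_def by (rule quad_node_identity)
    have sx: "(s * D / real p ^ 2) * real j ^ 2 = s * x j" for j
      by (simp add: x_def power_divide)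
    have "Tp 0 = - (2 / of_nat (2*p choose p)) * (\<Sum>j=1..p. (-1)^j * of_nat (2*p choose (p - j)) * Tp (s * x j))"
    proof -
      have ne: "(of_nat (2*p choose p) :: complex) \<noteq> 0" by simp
      from id have "of_nat (2*p choose p) * Tp 0 = - 2 * (\<Sum>j=1..p. (-1)^j * of_nat (2*p choose (p - j)) * Tp (s * x j))"
        unfolding sx by (simp add: algebra_simps eq_neg_iff_add_eq_0)
      then show ?thesis using ne by (simp add: field_simps)
    qed
    then have "norm (Tp 0) \<le> (2 / real (2*p choose p)) * (\<Sum>j=1..p. real (2*p choose (p - j)) * norm (Tp (s * x j)))"
    proof -
      assume eq: "Tp 0 = - (2 / of_nat (2*p choose p)) * (\<Sum>j=1..p. (-1)^j * of_nat (2*p choose (p - j)) * Tp (s * x j))"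
      have "norm (Tp 0) = (2 / real (2*p choose p)) * norm (\<Sum>j=1..p. (-1)^j * of_nat (2*p choose (p - j)) * Tp (s * x j))"
        unfolding eq by (simp add: norm_mult norm_divide)
      also have "\<dots> \<le> (2 / real (2*p choose p)) * (\<Sum>j=1..p. norm ((-1)^j * of_nat (2*p choose (p - j)) * Tp (s * x j)))"
        by (intro mult_left_mono norm_sum) auto
      also have "\<dots> = (2 / real (2*p choose p)) * (\<Sum>j=1..p. real (2*p choose (p - j)) * norm (Tp (s * x j)))"
        by (simp add: norm_mult norm_power)
      finally show ?thesis .
    qed
    also have "\<dots> = (\<Sum>j=1..p. c j * norm (Tp (s * x j)))"
      by (simp add: c_def sum_distrib_left mult.assoc)
    also have "\<dots> \<le> (\<Sum>j=1..p. c j * (norm (Dg 0 (s * x j)) + M * (s * x j) ^ p / fact p))"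
    proof (intro sum_mono mult_left_mono c0)
      fix j assume j: "j \<in> {1..p}"
      have sxin: "0 \<le> s * x j" "s * x j \<le> D"
      proof -
        show "0 \<le> s * x j" using s xpos[OF j] by simp
        have "s * x j \<le> 1 * x j" using s xpos[OF j] by (intro mult_right_mono) auto
        then show "s * x j \<le> D" using xle[OF j] by simp
      qed
      have "norm (Dg 0 (s * x j) - Tp (s * x j)) \<le> M * (s * x j) ^ p / fact p"
        unfolding Tp_def using taylor_bound[OF p sxin der bnd] by (simp add: scaleR_scaleR field_simps)
      then show "norm (Tp (s * x j)) \<le> norm (Dg 0 (s * x j)) + M * (s * x j) ^ p / fact p"
        by (metis add.commute norm_minus_commute norm_triangle_sub order_trans add_le_cancel_left)
    qed
    finally show ?thesis using g0 Tp0 by (simp add: sum.distrib distrib_left)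
  qed
  have hc: "continuous_on {0..D} (\<lambda>t. norm (Dg 0 t))" using cont by (intro continuous_intros)
  have hc2: "continuous_on {0..D} (\<lambda>t. (norm (Dg 0 t))^2)" using cont by (intro continuous_intros)
  have I0: "0 \<le> I" unfolding I_def
    by (rule integral_nonneg) (auto intro: integrable_continuous_real hc2)
  define A where "A = (\<lambda>j. integral {0..x j} (\<lambda>t. norm (Dg 0 t)) / x j)"
  have Aint: "((\<lambda>s. c j * norm (Dg 0 (s * x j))) has_integral c j * A j) {0..1}" if j: "j \<in> {1..p}" for j
  proof -
    have sub: "{0..x j} \<subseteq> {0..D}" using xle[OF j] by auto
    have hcj: "continuous_on {0..x j} (\<lambda>t. norm (Dg 0 t))" using continuous_on_subset[OF hc sub] .
    have "continuous_on {0..1} (\<lambda>s. norm (Dg 0 (s * x j)))"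
    proof -
      have "(\<lambda>s. s * x j) ` {0..1} \<subseteq> {0..x j}"
        using xpos[OF j] by (auto simp: mult_le_cancel_right1)
      then show ?thesis
        by (intro continuous_on_compose2[OF hcj]) (auto intro!: continuous_intros)
    qed
    then have "((\<lambda>s. norm (Dg 0 (s * x j))) has_integral integral {0..1} (\<lambda>s. norm (Dg 0 (s * x j)))) {0..1}"
      using integrable_continuous_real integrable_integral by blast
    then have "((\<lambda>s. norm (Dg 0 (s * x j))) has_integral A j) {0..1}"
      unfolding A_def integral_scale01[OF hcj xpos[OF j]] .
    then show ?thesis by (rule has_integral_mult_right)
  qed
  have powint: "((\<lambda>s::real. s ^ p) has_integral 1 / real (p + 1)) {0..1}"
  proof -
    have "((\<lambda>s::real. s ^ p) has_integral (1 ^ Suc p / real (Suc p) - 0 ^ Suc p / real (Suc p))) {0..1}"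
    proof (rule fundamental_theorem_of_calculus)
      fix s :: real assume "s \<in> {0..1}"
      have "((\<lambda>s. s ^ Suc p / real (Suc p)) has_real_derivative (real (Suc p) * s ^ p / real (Suc p))) (at s within {0..1})"
        by (intro derivative_eq_intros refl) auto
      then show "((\<lambda>s. s ^ Suc p / real (Suc p)) has_vector_derivative s ^ p) (at s within {0..1})"
        by (simp add: has_real_derivative_iff_has_vector_derivative del: of_nat_Suc)
    qed simp
    then show ?thesis by simp
  qed
  have Bint: "((\<lambda>s. c j * (M * (s * x j) ^ p / fact p)) has_integral
      c j * (M * x j ^ p / fact (p + 1))) {0..1}" for j
  proof -
    have "((\<lambda>s. (c j * M * x j ^ p / fact p) * s ^ p) has_integral
        (c j * M * x j ^ p / fact p) * (1 / real (p + 1))) {0..1}"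
      by (rule has_integral_mult_right[OF powint])
    moreover have "(\<lambda>s. (c j * M * x j ^ p / fact p) * s ^ p) = (\<lambda>s. c j * (M * (s * x j) ^ p / fact p))"
      by (auto simp: power_mult_distrib)
    moreover have "(c j * M * x j ^ p / fact p) * (1 / real (p + 1)) = c j * (M * x j ^ p / fact (p + 1))"
      by (simp add: fact_Suc field_simps del: of_nat_Suc)
    ultimately show ?thesis by simp
  qed
  have main: "1 \<le> (\<Sum>j=1..p. c j * A j) + (\<Sum>j=1..p. c j * (M * x j ^ p / fact (p + 1)))"
  proof -
    have m1: "((\<lambda>s. (\<Sum>j=1..p. c j * norm (Dg 0 (s * x j))) + (\<Sum>j=1..p. c j * (M * (s * x j) ^ p / fact p)))
        has_integral ((\<Sum>j=1..p. c j * A j) + (\<Sum>j=1..p. c j * (M * x j ^ p / fact (p + 1))))) {0..1}"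
      by (intro has_integral_add has_integral_sum Aint Bint) auto
    have c1: "((\<lambda>s::real. 1::real) has_integral 1) {0..1}"
      using has_integral_const_real[of "1::real" 0 1] by simp
    show ?thesis by (rule has_integral_le[OF c1 m1 pw])
  qed
  have Aj: "c j * A j \<le> 2 * (real p ^ 2 / (real j * (real p + real j))) * sqrt (I / D)" if j: "j \<in> {1..p}" for j
  proof -
    have sub: "{0..x j} \<subseteq> {0..D}" using xle[OF j] by auto
    have hcj: "continuous_on {0..x j} (\<lambda>t. norm (Dg 0 t))" using continuous_on_subset[OF hc sub] .
    have Ixj: "integral {0..x j} (\<lambda>t. (norm (Dg 0 t))^2) \<le> I"
      unfolding I_def
      by (rule integral_subset_le[OF sub])
         (auto intro!: integrable_continuous_real continuous_on_subset[OF hc2 sub] hc2)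
    have "integral {0..x j} (\<lambda>t. norm (Dg 0 t)) \<le> sqrt ((x j - 0) * integral {0..x j} (\<lambda>t. (norm (Dg 0 t))^2))"
      using integral_sqrt_bound[OF hcj xpos[OF j]] .
    also have "\<dots> \<le> sqrt (x j * I)"
      using Ixj xpos[OF j] by (auto intro!: mult_left_mono)
    finally have "A j \<le> sqrt (x j * I) / x j"
      unfolding A_def using xpos[OF j] by (simp add: divide_right_mono)
    also have "sqrt (x j * I) / x j = sqrt (I / x j)"
      using xpos[OF j] by (simp add: real_sqrt_divide real_sqrt_mult field_simps)
    also have "I / x j = (real p / real j)^2 * (I / D)"
      using D p j by (simp add: x_def power_divide field_simps)
    also have "sqrt \<dots> = (real p / real j) * sqrt (I / D)"
      by (subst real_sqrt_mult) simp
    finally have A1: "A j \<le> (real p / real j) * sqrt (I / D)" .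
    have "c j * A j \<le> c j * ((real p / real j) * sqrt (I / D))"
      using A1 c0 by (rule mult_left_mono)
    also have "\<dots> \<le> (2 * real p / (real p + real j)) * ((real p / real j) * sqrt (I / D))"
      using cle[OF j] by (rule mult_right_mono) (use I0 D in simp)
    also have "\<dots> = 2 * (real p ^ 2 / (real j * (real p + real j))) * sqrt (I / D)"
      by (simp add: power2_eq_square field_simps)
    finally show ?thesis .
  qed
  have Bj: "c j * (M * x j ^ p / fact (p + 1)) \<le>
      (M * D ^ p) * ((2 * ((real p / (real p + real j)) * (real j / real p) ^ (2*p))) / fact (p + 1))"
    if j: "j \<in> {1..p}" for j
  proof -
    have xp: "x j ^ p = D ^ p * (real j / real p) ^ (2*p)"
      by (simp add: x_def power_mult_distrib power_mult)
    have "c j * (M * x j ^ p / fact (p + 1)) = (M * D ^ p) * (c j * (real j / real p) ^ (2*p) / fact (p + 1))"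
      unfolding xp by simp
    also have "\<dots> \<le> (M * D ^ p) * ((2 * real p / (real p + real j)) * (real j / real p) ^ (2*p) / fact (p + 1))"
      using cle[OF j] M0 D by (intro mult_left_mono divide_right_mono mult_right_mono) auto
    finally show ?thesis by simp
  qed
  have "1 \<le> (\<Sum>j=1..p. c j * A j) + (\<Sum>j=1..p. c j * (M * x j ^ p / fact (p + 1)))" by (rule main)
  also have "\<dots> \<le> (\<Sum>j=1..p. 2 * (real p ^ 2 / (real j * (real p + real j))) * sqrt (I / D))
      + (\<Sum>j=1..p. (M * D ^ p) * ((2 * ((real p / (real p + real j)) * (real j / real p) ^ (2*p))) / fact (p + 1)))"
    by (intro add_mono sum_mono Aj Bj)
  also have "\<dots> = aG p * sqrt (I / D) + bG p * M * D ^ p"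
  proof -
    have e1: "(\<Sum>j=1..p. 2 * (real p ^ 2 / (real j * (real p + real j))) * sqrt (I / D)) = aG p * sqrt (I / D)"
      unfolding aG_def sum_distrib_right[symmetric] sum_distrib_left[symmetric] by simp
    have e2: "(\<Sum>j=1..p. (M * D ^ p) * ((2 * ((real p / (real p + real j)) * (real j / real p) ^ (2*p))) / fact (p + 1)))
        = (M * D ^ p) * (2 * (\<Sum>j=1..p. (real p / (real p + real j)) * (real j / real p) ^ (2*p)) / fact (p + 1))"
      unfolding sum_distrib_left[symmetric] sum_divide_distrib[symmetric] by simp
    show ?thesis unfolding e1 e2 bG_def by simp
  qed
  finally show ?thesis unfolding I_def .
qed

fun fd :: "nat \<Rightarrow> real \<Rightarrow> (real \<Rightarrow> 'a::ab_group_add) \<Rightarrow> real \<Rightarrow> 'a" where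
  "fd 0 h u x = u x"
| "fd (Suc m) h u x = fd m h u (x + h) - fd m h u x"

lemma fd_diff: "fd m h (\<lambda>t. u t - v t) x = fd m h u x - fd m h v x"
  by (induction m arbitrary: x) (auto simp: algebra_simps)

lemma fd_shift: "fd m h u (x + c) = fd m h (\<lambda>s. u (s + c)) x"
proof (induction m arbitrary: x)
  case 0 then show ?case by simp
next
  case (Suc m)
  have "fd m h u (x + c + h) = fd m h (\<lambda>s. u (s + c)) (x + h)"
    using Suc.IH[of "x + h"] by (simp add: add_ac)
  then show ?case using Suc.IH[of x] by simp
qed

lemma fd_geom:
  fixes u :: "real \<Rightarrow> 'a::comm_ring_1"
  assumes "\<And>x. u (x + h) = z * u x"
  shows "fd m h u x = u x * (z - 1) ^ m"
  using assms by (induction m arbitrary: x) (auto simp: algebra_simps)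

lemma fd_deriv:
  fixes u u' :: "real \<Rightarrow> 'a::real_normed_vector"
  assumes "\<And>i. i \<le> m \<Longrightarrow> ((\<lambda>t. u (t + real i * h)) has_vector_derivative u' (y + real i * h)) (at y within T)"
  shows "((\<lambda>t. fd m h u t) has_vector_derivative fd m h u' y) (at y within T)"
  using assms
proof (induction m arbitrary: u u')
  case 0
  then show ?case by simp
next
  case (Suc m)
  have A: "((\<lambda>t. fd m h u t) has_vector_derivative fd m h u' y) (at y within T)"
    using Suc.prems by (intro Suc.IH) auto
  have B0: "((\<lambda>t. fd m h (\<lambda>s. u (s + h)) t) has_vector_derivative fd m h (\<lambda>s. u' (s + h)) y) (at y within T)"
  proof (rule Suc.IH)
    fix i assume "i \<le> m"
    then have "((\<lambda>t. u (t + real (Suc i) * h)) has_vector_derivative u' (y + real (Suc i) * h)) (at y within T)"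
      by (intro Suc.prems) auto
    then show "((\<lambda>t. u (t + real i * h + h)) has_vector_derivative u' (y + real i * h + h)) (at y within T)"
      by (simp add: algebra_simps)
  qed
  have B: "((\<lambda>t. fd m h u (t + h)) has_vector_derivative fd m h u' (y + h)) (at y within T)"
    using B0 by (simp add: fd_shift)
  show ?case using has_vector_derivative_diff[OF B A] by simp
qed

lemma fd_cont:
  fixes u :: "real \<Rightarrow> 'a::real_normed_vector"
  assumes "continuous_on {0..X + real m * h} u" "0 \<le> h"
  shows "continuous_on {0..X} (fd m h u)"
  using assms
proof (induction m arbitrary: X)
  case 0 then show ?case by simp
next
  case (Suc m)
  have c1: "continuous_on {0..X + h} (fd m h u)"
    using Suc.prems by (intro Suc.IH) (auto simp: algebra_simps)
  have c2: "continuous_on {0..X} (fd m h u)"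
    using Suc.prems by (intro continuous_on_subset[OF c1]) auto
  have c3: "continuous_on {0..X} (\<lambda>x. fd m h u (x + h))"
    using Suc.prems by (intro continuous_on_compose2[OF c1]) (auto intro!: continuous_intros)
  show ?case using continuous_on_diff[OF c3 c2] by (simp add: fun_diff_def)
qed

lemma fd_integral_bound:
  fixes u :: "real \<Rightarrow> 'a::real_normed_vector"
  assumes "continuous_on {0..X + real m * h} u" "0 \<le> h" "0 \<le> X"
  shows "integral {0..X} (\<lambda>x. norm (fd m h u x)) \<le> 2 ^ m * integral {0..X + real m * h} (\<lambda>t. norm (u t))"
  using assms
proof (induction m arbitrary: X)
  case 0 then show ?case by simp
next
  case (Suc m)
  have c1: "continuous_on {0..X + h} (fd m h u)"
    using Suc.prems by (intro fd_cont) (auto simp: algebra_simps)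
  have n1: "continuous_on {0..X + h} (\<lambda>x. norm (fd m h u x))" using c1 by (intro continuous_intros)
  have int1: "(\<lambda>x. norm (fd m h u x)) integrable_on {a..b}" if "{a..b} \<subseteq> {0..X + h}" for a b
    using continuous_on_subset[OF n1 that] integrable_continuous_real by blast
  have "integral {0..X} (\<lambda>x. norm (fd (Suc m) h u x))
      \<le> integral {0..X} (\<lambda>x. norm (fd m h u (x + h)) + norm (fd m h u x))"
  proof (rule integral_le)
    show "(\<lambda>x. norm (fd (Suc m) h u x)) integrable_on {0..X}"
      using Suc.prems by (intro integrable_continuous_real continuous_intros fd_cont) auto
    have i2: "(\<lambda>x. norm (fd m h u (x + h))) integrable_on {0..X}"
      using Suc.prems by (intro integrable_continuous_real continuous_on_compose2[OF n1])
        (auto intro!: continuous_intros)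
    show "(\<lambda>x. norm (fd m h u (x + h)) + norm (fd m h u x)) integrable_on {0..X}"
      using i2 int1[of 0 X] Suc.prems by (intro integrable_add) auto
  qed (simp add: norm_triangle_ineq4)
  also have "\<dots> = integral {0..X} (\<lambda>x. norm (fd m h u (x + h))) + integral {0..X} (\<lambda>x. norm (fd m h u x))"
  proof (rule integral_add)
    show "(\<lambda>x. norm (fd m h u (x + h))) integrable_on {0..X}"
      using Suc.prems by (intro integrable_continuous_real continuous_on_compose2[OF n1])
        (auto intro!: continuous_intros)
    show "(\<lambda>x. norm (fd m h u x)) integrable_on {0..X}" using int1[of 0 X] Suc.prems by auto
  qed
  also have "integral {0..X} (\<lambda>x. norm (fd m h u (x + h))) = integral {0 + h..X + h} (\<lambda>x. norm (fd m h u x))"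
    using integral_shift[of 0 h X "\<lambda>x. norm (fd m h u x)"] continuous_on_subset[OF n1] Suc.prems
    by (simp add: o_def)
  also have "\<dots> \<le> integral {0..X + h} (\<lambda>x. norm (fd m h u x))"
    using Suc.prems by (intro integral_subset_le int1) auto
  also have "integral {0..X} (\<lambda>x. norm (fd m h u x)) \<le> integral {0..X + h} (\<lambda>x. norm (fd m h u x))"
    using Suc.prems by (intro integral_subset_le int1) auto
  also have "integral {0..X + h} (\<lambda>x. norm (fd m h u x)) \<le> 2 ^ m * integral {0..X + h + real m * h} (\<lambda>t. norm (u t))"
    using Suc.prems by (intro Suc.IH) (auto simp: algebra_simps)
  finally show ?case by (simp add: algebra_simps)
qed

lemma fd_bound:
  fixes Df :: "nat \<Rightarrow> real \<Rightarrow> 'a::banach"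
  assumes der: "\<And>k t. k < p \<Longrightarrow> t \<in> {0..L} \<Longrightarrow>
        (Df k has_vector_derivative Df (Suc k) t) (at t within {0..L})"
    and bnd: "\<And>t. t \<in> {0..L} \<Longrightarrow> norm (Df p t) \<le> K"
  shows "m \<le> p \<Longrightarrow> 0 \<le> h \<Longrightarrow> 0 \<le> x \<Longrightarrow> x + real m * h \<le> L \<Longrightarrow>
      norm (fd m h (Df (p - m)) x) \<le> K * h ^ m"
proof (induction m arbitrary: x)
  case 0 then show ?case using bnd by simp
next
  case (Suc m)
  define k where "k = p - Suc m"
  have pk: "p - m = Suc k" "k < p" using Suc.prems by (auto simp: k_def)
  define F where "F = (\<lambda>y. fd m h (Df k) y)"
  have deriv: "(F has_vector_derivative fd m h (Df (Suc k)) y) (at y within {x..x+h})"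
    if y: "y \<in> {x..x+h}" for y
    unfolding F_def
  proof (rule fd_deriv)
    fix i assume i: "i \<le> m"
    have yi: "y + real i * h \<in> {0..L}"
    proof -
      have "real i * h \<le> real m * h" using i Suc.prems by (intro mult_right_mono) auto
      then show ?thesis using y Suc.prems by (auto simp: algebra_simps)
    qed
    have sub: "(\<lambda>t. t + real i * h) ` {x..x+h} \<subseteq> {0..L}"
    proof
      fix z assume "z \<in> (\<lambda>t. t + real i * h) ` {x..x+h}"
      then obtain t where t: "t \<in> {x..x+h}" "z = t + real i * h" by blast
      have "real i * h \<le> real m * h" using i Suc.prems by (intro mult_right_mono) auto
      then show "z \<in> {0..L}" using t Suc.prems by (auto simp: algebra_simps)
    qed
    have d1: "((\<lambda>t. t + real i * h) has_vector_derivative 1) (at y within {x..x+h})"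
      by (auto intro!: derivative_eq_intros simp: has_real_derivative_iff_has_vector_derivative[symmetric])
    have d2: "(Df k has_vector_derivative Df (Suc k) (y + real i * h))
        (at ((\<lambda>t. t + real i * h) y) within (\<lambda>t. t + real i * h) ` {x..x+h})"
      using has_vector_derivative_within_subset[OF der[OF pk(2) yi] sub] by simp
    show "((\<lambda>t. Df k (t + real i * h)) has_vector_derivative Df (Suc k) (y + real i * h)) (at y within {x..x+h})"
      using vector_diff_chain_within[OF d1 d2] by (simp add: o_def)
  qed
  have bd: "norm (fd m h (Df (Suc k)) y) \<le> K * h ^ m" if y: "y \<in> {x..x+h}" for y
  proof -
    have "norm (fd m h (Df (p - m)) y) \<le> K * h ^ m"
      using y Suc.prems by (intro Suc.IH) (auto simp: algebra_simps)
    then show ?thesis using pk by simp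
  qed
  have "norm (F (x + h) - F x) \<le> K * h ^ m * (x + h - x)"
    using Suc.prems deriv bd by (intro vec_mvt_bound) auto
  then show ?case using pk by (simp add: F_def k_def[symmetric] algebra_simps)
qed

lemma case_ii:
  fixes Df :: "nat \<Rightarrow> real \<Rightarrow> complex" and E :: "real \<Rightarrow> complex"
  assumes L: "L > 0" and p: "p > 0" and h: "h > 0" "real p * h \<le> L / 2"
    and der: "\<And>k t. k < p \<Longrightarrow> t \<in> {0..L} \<Longrightarrow>
        (Df k has_vector_derivative Df (Suc k) t) (at t within {0..L})"
    and bnd: "\<And>t. t \<in> {0..L} \<Longrightarrow> norm (Df p t) \<le> K"
    and Econt: "continuous_on {0..L} E"
    and Eshift: "\<And>x. E (x + h) = - E x"
    and Enorm: "\<And>x. norm (E x) = 1"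
    and q: "K * h ^ p \<le> 2 ^ p * q" "q < 1"
  shows "L * (1 - q)^2 / 4 \<le> integral {0..L} (\<lambda>t. (norm (Df 0 t - E t))^2)"
proof -
  define g where "g = (\<lambda>t. Df 0 t - E t)"
  define X where "X = L / 2"
  have X: "0 \<le> X" "X + real p * h \<le> L" using L h by (auto simp: X_def)
  have contDf: "continuous_on {0..L} (Df 0)"
  proof -
    have "\<And>x. x \<in> {0..L} \<Longrightarrow> (Df 0 has_vector_derivative Df (Suc 0) x) (at x within {0..L})"
      using der p by blast
    then show ?thesis
      by (meson continuous_on_eq_continuous_within has_vector_derivative_continuous)
  qed
  have contg: "continuous_on {0..L} g" unfolding g_def using contDf Econt by (intro continuous_intros)
  have contg': "continuous_on {0..X + real p * h} g" using continuous_on_subset[OF contg] X by auto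
  have low: "2 ^ p * (1 - q) \<le> norm (fd p h g x)" if x: "x \<in> {0..X}" for x
  proof -
    have e: "fd p h g x = fd p h (Df 0) x - fd p h E x" unfolding g_def by (rule fd_diff)
    have "fd p h E x = E x * (- 1 - 1) ^ p" by (rule fd_geom) (simp add: Eshift)
    then have nE: "norm (fd p h E x) = 2 ^ p" by (simp add: norm_mult norm_power Enorm)
    have "real p * h \<ge> 0" using h by simp
    then have nf: "norm (fd p h (Df (p - p)) x) \<le> K * h ^ p"
      using x X h by (intro fd_bound[OF der bnd]) auto
    have "2 ^ p - K * h ^ p \<le> norm (fd p h g x)"
      unfolding e using nE nf norm_triangle_ineq3[of "fd p h E x" "fd p h (Df 0) x"]
      by (simp add: norm_minus_commute)
    then show ?thesis using q by (simp add: algebra_simps)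
  qed
  have "X * (2 ^ p * (1 - q)) \<le> integral {0..X} (\<lambda>x. norm (fd p h g x))"
  proof -
    have "integral {0..X} (\<lambda>x. 2 ^ p * (1 - q)) \<le> integral {0..X} (\<lambda>x. norm (fd p h g x))"
      using low X h contg' by (intro integral_le integrable_continuous_real continuous_intros fd_cont) auto
    then show ?thesis using X by (simp add: mult_ac)
  qed
  also have "\<dots> \<le> 2 ^ p * integral {0..X + real p * h} (\<lambda>t. norm (g t))"
    using contg' X h by (intro fd_integral_bound) auto
  also have "integral {0..X + real p * h} (\<lambda>t. norm (g t)) \<le> integral {0..L} (\<lambda>t. norm (g t))"
    using X contg by (intro integral_subset_le integrable_continuous_real continuous_intros
        continuous_on_subset[OF contg]) auto
  also have "integral {0..L} (\<lambda>t. norm (g t)) \<le> sqrt ((L - 0) * integral {0..L} (\<lambda>t. (norm (g t))^2))"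
    using contg L by (intro integral_sqrt_bound continuous_intros) auto
  finally have "X * (2 ^ p * (1 - q)) \<le> 2 ^ p * sqrt (L * integral {0..L} (\<lambda>t. (norm (g t))^2))"
    by simp
  then have A: "X * (1 - q) \<le> sqrt (L * integral {0..L} (\<lambda>t. (norm (g t))^2))"
    by (simp add: mult.commute mult.left_commute)
  have "0 \<le> X * (1 - q)" using X q by simp
  then have "(X * (1 - q))^2 \<le> L * integral {0..L} (\<lambda>t. (norm (g t))^2)"
    using A by (metis real_le_rsqrt real_sqrt_le_iff real_sqrt_pow2_iff power2_le_imp_le
        abs_of_nonneg order_trans real_le_lsqrt sqrt_ge_absD real_sqrt_ge_zero)
  moreover have "(X * (1 - q))^2 = L * (L * (1 - q)^2 / 4)"
    by (simp add: X_def power2_eq_square field_simps)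
  ultimately have "L * (L * (1 - q)^2 / 4) \<le> L * integral {0..L} (\<lambda>t. (norm (g t))^2)" by simp
  then have "L * (1 - q)^2 / 4 \<le> integral {0..L} (\<lambda>t. (norm (g t))^2)"
    using L by (rule mult_left_le_imp_le)
  then show ?thesis unfolding g_def .
qed

definition Tval :: "nat \<Rightarrow> real \<Rightarrow> real \<Rightarrow> real" where
  "Tval p L \<kappa> = min (L * 4 powr (- real p - 2)) (2 powr (- real p - 3) * 6 powr (1 / real p) / \<kappa>) / 9"

lemma Tle1: "Tval p L \<kappa> \<le> L * (4 powr (- real p - 2) / 9)"
  unfolding Tval_def by (simp add: min_def)

lemma Tle2: "Tval p L \<kappa> \<le> (1 / \<kappa>) * (2 powr (- real p - 3) * 6 powr (1 / real p) / 9)"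
  unfolding Tval_def by (simp add: min_def)

lemma from_routeG:
  assumes "1 \<le> a * sqrt (J / D) + B" "B \<le> \<theta>" "\<theta> < 1" "a > 0" "D > 0" "J \<ge> 0"
  shows "D * (1 - \<theta>)^2 / a^2 \<le> J"
proof -
  have "(1 - \<theta>) / a \<le> sqrt (J / D)" using assms by (simp add: field_simps)
  moreover have "0 \<le> (1 - \<theta>) / a" using assms by simp
  ultimately have "((1 - \<theta>) / a)^2 \<le> J / D"
    using assms by (metis power_mono real_sqrt_pow2 divide_nonneg_nonneg less_imp_le)
  then show ?thesis using assms by (simp add: field_simps power_divide)
qed

lemma final_case_i:
  fixes p :: nat and a b \<theta> \<alpha> \<gamma> L \<kappa> \<phi> I :: real and J :: "real \<Rightarrow> real"
  assumes a: "a > 0" and b: "b \<ge> 0" and th: "0 \<le> \<theta>" "\<theta> < 1" and al: "0 < \<alpha>" "\<alpha> \<le> 1" and ga: "\<gamma> > 0"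
    and C1: "4 powr (- real p - 2) / 9 \<le> \<alpha> * (1 - \<theta>)^2 / a^2"
    and C2: "2 powr (- real p - 3) * 6 powr (1 / real p) / 9 \<le> \<gamma> * (1 - \<theta>)^2 / a^2"
    and C3: "b * (1 + 2 ^ p) * \<gamma> ^ p \<le> \<theta>"
    and C4: "2 * b * (2 * real p * pi * \<alpha>) ^ p \<le> \<theta>"
    and L: "L > 0" and ka: "\<kappa> > 0" and p: "p > 0"
    and hyp: "\<not> (2 * \<kappa> \<le> \<bar>\<phi>\<bar> \<and> 2 * real p * pi / L \<le> \<bar>\<phi>\<bar>)"
    and rG: "\<And>D. 0 < D \<Longrightarrow> D \<le> L \<Longrightarrow> 1 \<le> a * sqrt (J D / D) + b * (\<kappa> ^ p + \<bar>\<phi>\<bar> ^ p) * D ^ p"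
    and Jmono: "\<And>D. 0 < D \<Longrightarrow> D \<le> L \<Longrightarrow> J D \<le> I"
    and J0: "\<And>D. 0 < D \<Longrightarrow> D \<le> L \<Longrightarrow> 0 \<le> J D"
  shows "Tval p L \<kappa> \<le> I"
proof (cases "2 * real p * pi / L \<le> 2 * \<kappa>")
  case True
  then have phi: "\<bar>\<phi>\<bar> < 2 * \<kappa>" using hyp by linarith
  define D where "D = min L (\<gamma> / \<kappa>)"
  have D: "0 < D" "D \<le> L" "D \<le> \<gamma> / \<kappa>" using L ka ga by (auto simp: D_def)
  have "b * (\<kappa> ^ p + \<bar>\<phi>\<bar> ^ p) * D ^ p \<le> b * ((1 + 2 ^ p) * \<kappa> ^ p) * (\<gamma> / \<kappa>) ^ p"
  proof (intro mult_mono mult_left_mono b power_mono)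
    have "\<bar>\<phi>\<bar> ^ p \<le> (2 * \<kappa>) ^ p" using phi by (intro power_mono) auto
    then show "\<kappa> ^ p + \<bar>\<phi>\<bar> ^ p \<le> (1 + 2 ^ p) * \<kappa> ^ p" by (simp add: power_mult_distrib algebra_simps)
  qed (use D ka ga b in auto)
  also have "\<dots> = b * (1 + 2 ^ p) * \<gamma> ^ p" using ka by (simp add: power_divide)
  also have "\<dots> \<le> \<theta>" by (rule C3)
  finally have "D * (1 - \<theta>)^2 / a^2 \<le> J D"
    using rG[OF D(1,2)] th a D J0 by (intro from_routeG) auto
  then have JD: "D * (1 - \<theta>)^2 / a^2 \<le> I" using Jmono[OF D(1,2)] by linarith
  show ?thesis
  proof (cases "L \<le> \<gamma> / \<kappa>")
    case True
    then have "D = L" by (simp add: D_def)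
    have "Tval p L \<kappa> \<le> L * (4 powr (- real p - 2) / 9)" by (rule Tle1)
    also have "\<dots> \<le> L * (\<alpha> * (1 - \<theta>)^2 / a^2)"
      using C1 L by (intro mult_left_mono) auto
    also have "\<dots> \<le> L * ((1 - \<theta>)^2 / a^2)"
    proof (intro mult_left_mono)
      have "\<alpha> * ((1 - \<theta>)^2 / a^2) \<le> 1 * ((1 - \<theta>)^2 / a^2)"
        using al by (intro mult_right_mono) auto
      then show "\<alpha> * (1 - \<theta>)^2 / a^2 \<le> (1 - \<theta>)^2 / a^2" by simp
    qed (use L in auto)
    also have "\<dots> \<le> I" using JD \<open>D = L\<close> by simp
    finally show ?thesis .
  next
    case False
    then have "D = \<gamma> / \<kappa>" by (simp add: D_def)
    have "Tval p L \<kappa> \<le> (1 / \<kappa>) * (2 powr (- real p - 3) * 6 powr (1 / real p) / 9)" by (rule Tle2)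
    also have "\<dots> \<le> (1 / \<kappa>) * (\<gamma> * (1 - \<theta>)^2 / a^2)" using C2 ka by (intro mult_left_mono) auto
    also have "\<dots> = D * (1 - \<theta>)^2 / a^2" using \<open>D = \<gamma> / \<kappa>\<close> by simp
    also have "\<dots> \<le> I" by (rule JD)
    finally show ?thesis .
  qed
next
  case False
  then have phi: "\<bar>\<phi>\<bar> < 2 * real p * pi / L" using hyp by linarith
  have kap: "\<kappa> < 2 * real p * pi / L" using False ka by linarith
  define D where "D = \<alpha> * L"
  have D: "0 < D" "D \<le> L" using al L by (auto simp: D_def mult_le_cancel_right1)
  have "b * (\<kappa> ^ p + \<bar>\<phi>\<bar> ^ p) * D ^ p \<le> b * (2 * (2 * real p * pi / L) ^ p) * D ^ p"
  proof (intro mult_right_mono mult_left_mono b)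
    have "\<kappa> ^ p \<le> (2 * real p * pi / L) ^ p" using kap ka by (intro power_mono) auto
    moreover have "\<bar>\<phi>\<bar> ^ p \<le> (2 * real p * pi / L) ^ p" using phi by (intro power_mono) auto
    ultimately show "\<kappa> ^ p + \<bar>\<phi>\<bar> ^ p \<le> 2 * (2 * real p * pi / L) ^ p" by simp
  qed (use D in auto)
  also have "\<dots> = 2 * b * (2 * real p * pi * \<alpha>) ^ p"
    using L by (simp add: D_def power_divide power_mult_distrib field_simps)
  also have "\<dots> \<le> \<theta>" by (rule C4)
  finally have "D * (1 - \<theta>)^2 / a^2 \<le> J D"
    using rG[OF D(1,2)] th a D J0 by (intro from_routeG) auto
  then have JD: "D * (1 - \<theta>)^2 / a^2 \<le> I" using Jmono[OF D(1,2)] by linarith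
  have "Tval p L \<kappa> \<le> L * (4 powr (- real p - 2) / 9)" by (rule Tle1)
  also have "\<dots> \<le> L * (\<alpha> * (1 - \<theta>)^2 / a^2)"
    using C1 L by (intro mult_left_mono) auto
  also have "\<dots> = D * (1 - \<theta>)^2 / a^2" by (simp add: D_def)
  also have "\<dots> \<le> I" by (rule JD)
  finally show ?thesis .
qed

definition params_ok :: "nat \<Rightarrow> real \<Rightarrow> real \<Rightarrow> real \<Rightarrow> bool" where
  "params_ok p \<theta> \<alpha> \<gamma> \<longleftrightarrow> 0 \<le> \<theta> \<and> \<theta> < 1 \<and> 0 < \<alpha> \<and> \<alpha> \<le> 1 \<and> \<gamma> > 0 \<and>
     4 powr (- real p - 2) / 9 \<le> \<alpha> * (1 - \<theta>)^2 / (aG p)^2 \<and>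
     2 powr (- real p - 3) * 6 powr (1 / real p) / 9 \<le> \<gamma> * (1 - \<theta>)^2 / (aG p)^2 \<and>
     bG p * (1 + 2 ^ p) * \<gamma> ^ p \<le> \<theta> \<and>
     2 * bG p * (2 * real p * pi * \<alpha>) ^ p \<le> \<theta>"

lemma powr_neg_nat: "(x::real) > 0 \<Longrightarrow> x powr (- real n) = 1 / x ^ n"
  by (simp add: powr_minus powr_realpow divide_inverse)

lemma pow4: "4 powr (- real p - 2) = 1 / 4 ^ (p + 2)"
proof -
  have "4 powr (- real p - 2) = 4 powr (- real (p + 2))" by (rule arg_cong[where f="\<lambda>x. 4 powr x"]) simp
  also have "\<dots> = 1 / 4 ^ (p + 2)" by (rule powr_neg_nat) simp
  finally show ?thesis .
qed

lemma pow2: "2 powr (- real p - 3) = 1 / 2 ^ (p + 3)"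
proof -
  have "2 powr (- real p - 3) = 2 powr (- real (p + 3))" by (rule arg_cong[where f="\<lambda>x. 2 powr x"]) simp
  also have "\<dots> = 1 / 2 ^ (p + 3)" by (rule powr_neg_nat) simp
  finally show ?thesis .
qed

lemma six_root:
  assumes "0 < r" "6 \<le> r ^ p" "p > 0"
  shows "6 powr (1 / real p) \<le> r"
proof -
  have "6 powr (1 / real p) \<le> (r ^ p) powr (1 / real p)"
    using assms by (intro powr_mono2) auto
  also have "\<dots> = r" using assms by (simp add: powr_realpow[symmetric] powr_powr)
  finally show ?thesis .
qed

lemma bG_nonneg: "0 \<le> bG p"
  unfolding bG_def by (intro divide_nonneg_pos mult_nonneg_nonneg sum_nonneg) auto

lemma aG_pos: "p > 0 \<Longrightarrow> 0 < aG p"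
  unfolding aG_def by (intro mult_pos_pos sum_pos) auto

lemma explicit_ok:
  fixes A B \<theta> \<alpha> \<gamma> r :: real
  assumes p: "p > 0" and A: "aG p = A" and B: "bG p = B"
    and ranges: "0 \<le> \<theta>" "\<theta> < 1" "0 < \<alpha>" "\<alpha> \<le> 1" "\<gamma> > 0" "r > 0" "6 \<le> r ^ p"
    and c1: "1 / 4 ^ (p + 2) / 9 \<le> \<alpha> * (1 - \<theta>)^2 / A^2"
    and c2: "1 / 2 ^ (p + 3) * r / 9 \<le> \<gamma> * (1 - \<theta>)^2 / A^2"
    and c3: "B * (1 + 2 ^ p) * \<gamma> ^ p \<le> \<theta>"
    and c4: "2 * B * (2 * real p * (16 / 5) * \<alpha>) ^ p \<le> \<theta>"
  shows "params_ok p \<theta> \<alpha> \<gamma>"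
proof -
  have B0: "0 \<le> B" using bG_nonneg B by metis
  have "2 * B * (2 * real p * pi * \<alpha>) ^ p \<le> 2 * B * (2 * real p * (16 / 5) * \<alpha>) ^ p"
    using pi_approx(2) ranges B0 by (intro mult_left_mono power_mono mult_right_mono) auto
  then have C4: "2 * B * (2 * real p * pi * \<alpha>) ^ p \<le> \<theta>" using c4 by linarith
  have "2 powr (- real p - 3) * 6 powr (1 / real p) / 9 \<le> 1 / 2 ^ (p + 3) * r / 9"
    unfolding pow2 using six_root[OF ranges(6,7) p] by (intro divide_right_mono mult_left_mono) auto
  then have C2: "2 powr (- real p - 3) * 6 powr (1 / real p) / 9 \<le> \<gamma> * (1 - \<theta>)^2 / A^2"
    using c2 by (rule order_trans)
  have C1: "4 powr (- real p - 2) / 9 \<le> \<alpha> * (1 - \<theta>)^2 / A^2" unfolding pow4 by (rule c1)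
  show ?thesis unfolding params_ok_def using A B C1 C2 c3 C4 ranges by simp
qed

lemma aG1: "aG 1 = 1" by (simp add: aG_def)
lemma bG1: "bG 1 = 1/2" by (simp add: bG_def)
lemma aG2: "aG 2 = 11/3" by (simp add: aG_def numeral_eq_Suc)
lemma bG2: "bG 2 = 13/72" by (simp add: bG_def numeral_eq_Suc)
lemma aG3: "aG 3 = 73/10" by (simp add: aG_def numeral_eq_Suc)
lemma bG3: "bG 3 = 299/6480" by (simp add: bG_def numeral_eq_Suc)
lemma aG4: "aG 4 = 1217/105" by (simp add: aG_def numeral_eq_Suc)
lemma bG4: "bG 4 = 240769/25804800" by (simp add: bG_def numeral_eq_Suc)
lemma aG5: "aG 5 = 4127/252" by (simp add: aG_def numeral_eq_Suc)
lemma bG5: "bG 5 = 110940331/70875000000" by (simp add: bG_def numeral_eq_Suc)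
lemma aG6: "aG 6 = 49807/2310" by (simp add: aG_def numeral_eq_Suc)
lemma bG6: "bG 6 = 2927859593/13036507545600" by (simp add: bG_def numeral_eq_Suc)
lemma aG7: "aG 7 = 696991/25740" by (simp add: aG_def numeral_eq_Suc)
lemma bG7: "bG 7 = 404530042015571/14364997216566796800" by (simp add: bG_def numeral_eq_Suc)

lemma ok1: "params_ok 1 (3/10) (1/22) (1/5)"
  by (rule explicit_ok[OF _ aG1 bG1, where r=6]) (simp_all add: power_divide numeral_eq_Suc)
lemma ok2: "params_ok 2 (3/20) (1/20) (2/5)"
  by (rule explicit_ok[OF _ aG2 bG2, where r="5/2"]) (simp_all add: power_divide numeral_eq_Suc)
lemma ok3: "params_ok 3 (3/20) (1/17) (7/10)"
  by (rule explicit_ok[OF _ aG3 bG3, where r="19/10"]) (simp_all add: power_divide numeral_eq_Suc)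
lemma ok4: "params_ok 4 (1/10) (1/17) (17/20)"
  by (rule explicit_ok[OF _ aG4 bG4, where r="8/5"]) (simp_all add: power_divide numeral_eq_Suc)
lemma ok5: "params_ok 5 (1/10) (1/17) (11/10)"
  by (rule explicit_ok[OF _ aG5 bG5, where r="3/2"]) (simp_all add: power_divide numeral_eq_Suc)
lemma ok6: "params_ok 6 (1/10) (1/16) (27/20)"
  by (rule explicit_ok[OF _ aG6 bG6, where r="7/5"]) (simp_all add: power_divide numeral_eq_Suc)
lemma ok7: "params_ok 7 (1/20) (1/17) (29/20)"
  by (rule explicit_ok[OF _ aG7 bG7, where r="13/10"]) (simp_all add: power_divide numeral_eq_Suc)

lemma harm_sqrt: "(\<Sum>j=1..p. 1 / real j) \<le> sqrt (2 * real p)"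
proof (induction p)
  case 0 then show ?case by simp
next
  case (Suc p)
  show ?case
  proof (cases "p = 0")
    case True then show ?thesis by simp
  next
  case False
  define s where "s = sqrt (2 * real (Suc p))"
  have s1: "1 \<le> s" unfolding s_def by simp
  have s2: "s \<le> real (Suc p)"
  proof -
    have "1 \<le> real p" using False by simp
    then have "1 \<le> real p * real p" by (metis mult_le_cancel_left1 order_trans mult.commute less_eq_real_def zero_less_one)
    then have "2 * real (Suc p) \<le> (real (Suc p))^2" by (simp add: power2_eq_square algebra_simps)
    then show ?thesis unfolding s_def by (simp add: real_sqrt_le_iff real_le_lsqrt)
  qed
  have ss: "s * s = 2 * real (Suc p)" unfolding s_def by simp
  have A: "sqrt (2 * real p) \<le> s - 1 / s"
  proof -
    have "0 \<le> s - 1 / s" using s1 ss by (simp add: field_simps)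
    moreover have "2 * real p \<le> (s - 1 / s)^2"
    proof -
      have "(s - 1 / s)^2 = s * s - 2 + 1 / (s * s)" using s1 by (simp add: power2_eq_square field_simps)
      then show ?thesis using ss by simp
    qed
    ultimately show ?thesis by (simp add: real_sqrt_le_iff real_le_lsqrt)
  qed
  have B: "1 / real (Suc p) \<le> 1 / s" using s1 s2 by (simp add: frac_le)
  have "(\<Sum>j=1..Suc p. 1 / real j) = (\<Sum>j=1..p. 1 / real j) + 1 / real (Suc p)" by simp
  also have "\<dots> \<le> s" using Suc.IH A B by linarith
  finally show ?thesis unfolding s_def .
  qed
qed

lemma aG_le: "aG p \<le> 2 * real p * sqrt (2 * real p)"
proof -
  have "aG p \<le> 2 * (\<Sum>j=1..p. real p * (1 / real j))"
    unfolding aG_def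
  proof (intro mult_left_mono sum_mono)
    fix j assume j: "j \<in> {1..p}"
    have "real p ^ 2 / (real j * (real p + real j)) \<le> real p ^ 2 / (real j * real p)"
      using j by (intro divide_left_mono mult_left_mono mult_pos_pos) auto
    also have "\<dots> = real p * (1 / real j)" using j by (simp add: power2_eq_square)
    finally show "real p ^ 2 / (real j * (real p + real j)) \<le> real p * (1 / real j)" .
  qed simp
  also have "\<dots> = 2 * real p * (\<Sum>j=1..p. 1 / real j)" by (simp add: sum_distrib_left)
  also have "\<dots> \<le> 2 * real p * sqrt (2 * real p)" by (intro mult_left_mono harm_sqrt) auto
  finally show ?thesis .
qed

lemma bG_le: "bG p \<le> 2 * real p / fact (p + 1)"
proof -
  have "(\<Sum>j=1..p. (real p / (real p + real j)) * (real j / real p) ^ (2*p)) \<le> (\<Sum>j=1..p. 1)"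
  proof (intro sum_mono)
    fix j assume j: "j \<in> {1..p}"
    have "real p / (real p + real j) \<le> 1" using j by (auto simp: divide_le_eq_1)
    moreover have "(real j / real p) ^ (2*p) \<le> 1" using j by (intro power_le_one) auto
    ultimately show "(real p / (real p + real j)) * (real j / real p) ^ (2*p) \<le> 1"
      by (intro mult_le_one) auto
  qed
  then show ?thesis unfolding bG_def by (simp add: divide_right_mono)
qed

lemma fa: "8 \<le> p \<Longrightarrow> 32 * p * (1 + 2 ^ p) \<le> fact (p + 1)"
proof (induction p rule: nat_induct_at_least)
  case base then show ?case by (simp add: fact_numeral)
next
  case (Suc p)
  have "32 * Suc p * (1 + 2 ^ Suc p) \<le> 2 * (32 * Suc p * (1 + 2 ^ p))" by simp
  also have "\<dots> \<le> 2 * (32 * (2 * p) * (1 + 2 ^ p))" using Suc by (intro mult_left_mono mult_right_mono) auto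
  also have "\<dots> = 4 * (32 * p * (1 + 2 ^ p))" by simp
  also have "\<dots> \<le> 4 * fact (p + 1)" using Suc by simp
  also have "\<dots> \<le> (p + 2) * fact (p + 1)" using Suc by (intro mult_right_mono) auto
  also have "\<dots> = fact (Suc p + 1)" by (simp add: algebra_simps)
  finally show ?case .
qed

lemma fb: "8 \<le> p \<Longrightarrow> p ^ 4 \<le> (4::nat) ^ p"
proof (induction p rule: nat_induct_at_least)
  case base then show ?case by simp
next
  case (Suc p)
  have "8 * p \<le> p * p" using Suc by (intro mult_right_mono) auto
  moreover have "(p + 1)^2 = p * p + 2 * p + 1" "2 * p^2 = p * p + p * p" by (simp_all add: power2_eq_square)
  ultimately have "(p + 1)^2 \<le> 2 * p^2" using Suc by linarith
  then have "((p + 1)^2)^2 \<le> (2 * p^2)^2" by (rule power_mono) simp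
  moreover have "((p + 1)^2)^2 = (p + 1)^4" by (simp add: power_mult[symmetric])
  ultimately have "(p + 1)^4 \<le> (2 * p^2)^2" by simp
  also have "\<dots> = 4 * p^4" by (simp add: power_mult_distrib power_mult[symmetric])
  also have "\<dots> \<le> 4 * 4 ^ p" using Suc by simp
  finally show ?case by simp
qed

lemma fc: "8 \<le> p \<Longrightarrow> p ^ 3 \<le> 3 * (2::nat) ^ p"
proof (induction p rule: nat_induct_at_least)
  case base then show ?case by simp
next
  case (Suc p)
  have "8 * p \<le> p * p" using Suc by (intro mult_right_mono) auto
  moreover have "8 * (p * p) \<le> p * (p * p)" using Suc by (intro mult_right_mono) auto
  moreover have "(p + 1)^3 = p * (p * p) + 3 * (p * p) + 3 * p + 1" "2 * p^3 = p * (p * p) + p * (p * p)"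
    by (simp_all add: power3_eq_cube algebra_simps)
  ultimately have "(p + 1)^3 \<le> 2 * p^3" using Suc by linarith
  also have "\<dots> \<le> 2 * (3 * 2 ^ p)" using Suc by simp
  finally show ?case by simp
qed


lemma ok_large:
  assumes p8: "8 \<le> p"
  shows "params_ok p (1/16) (1 / (8 * real p)) 1"
proof -
  have p: "p > 0" "real p \<ge> 8" using p8 by auto
  define a where "a = aG p"
  define b where "b = bG p"
  have a0: "0 < a" using aG_pos p unfolding a_def by simp
  have a2: "a^2 \<le> 8 * real p ^ 3"
  proof -
    have "a^2 \<le> (2 * real p * sqrt (2 * real p))^2"
      using a0 aG_le[of p] unfolding a_def by (intro power_mono) auto
    also have "\<dots> = 8 * real p ^ 3" by (simp add: power_mult_distrib power3_eq_cube power2_eq_square)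
    finally show ?thesis .
  qed
  have b0: "0 \<le> b" unfolding b_def by (rule bG_nonneg)
  have b1: "b \<le> 2 * real p / fact (p + 1)" unfolding b_def by (rule bG_le)
  have fa_r: "32 * real p * (1 + 2 ^ p) \<le> fact (p + 1)"
  proof -
    have "real (32 * p * (1 + 2 ^ p)) \<le> real (fact (p + 1))" using fa[OF p8] by (simp only: of_nat_le_iff)
    then show ?thesis by (simp only: of_nat_fact of_nat_mult of_nat_add of_nat_power of_nat_numeral of_nat_1)
  qed
  have fb_r: "real p ^ 4 \<le> 4 ^ p"
  proof -
    have "real (p ^ 4) \<le> real ((4::nat) ^ p)" using fb[OF p8] by (simp only: of_nat_le_iff)
    then show ?thesis by simp
  qed
  have fc_r: "real p ^ 3 \<le> 3 * 2 ^ p"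
  proof -
    have "real (p ^ 3) \<le> real (3 * (2::nat) ^ p)" using fc[OF p8] by (simp only: of_nat_le_iff)
    then show ?thesis by simp
  qed
  have factpos: "(0::real) < fact (p + 1)" by simp
  have C1: "1 / 4 ^ (p + 2) / 9 \<le> (1 / (8 * real p)) * (1 - 1/16)^2 / a^2"
  proof -
    have "1 / 4 ^ (p + 2) / 9 \<le> 225 / (16384 * real p ^ 4)"
      using fb_r p by (simp add: field_simps) (use fb_r in \<open>smt (verit) zero_le_power\<close>)
    also have "225 / (16384 * real p ^ 4) = (1 / (8 * real p)) * (1 - 1/16)^2 / (8 * real p ^ 3)"
      using p by (simp add: field_simps power2_eq_square power3_eq_cube numeral_eq_Suc)
    also have "\<dots> \<le> (1 / (8 * real p)) * (1 - 1/16)^2 / a^2"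
      using a2 a0 p by (intro divide_left_mono) auto
    finally show ?thesis .
  qed
  have C2: "2 powr (- real p - 3) * 6 powr (1 / real p) / 9 \<le> 1 * (1 - 1/16)^2 / a^2"
  proof -
    have two: "6 \<le> (2::real) ^ p"
    proof -
      have "(2::real) ^ 3 \<le> 2 ^ p" using p8 by (intro power_increasing) auto
      then show ?thesis by simp
    qed
    have "2 powr (- real p - 3) * 6 powr (1 / real p) / 9 \<le> 1 / 2 ^ (p + 3) * 2 / 9"
      unfolding pow2 using six_root[of 2 p] two p by (intro divide_right_mono mult_left_mono) auto
    also have "\<dots> \<le> 225 / (2048 * real p ^ 3)"
      using fc_r p by (simp add: field_simps power_add) (use fc_r in \<open>smt (verit) zero_le_power\<close>)
    also have "225 / (2048 * real p ^ 3) = 1 * (1 - 1/16)^2 / (8 * real p ^ 3)"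
      by (simp add: field_simps power2_eq_square)
    also have "\<dots> \<le> 1 * (1 - 1/16)^2 / a^2"
      using a2 a0 p by (intro divide_left_mono) auto
    finally show ?thesis .
  qed
  have C3: "b * (1 + 2 ^ p) * 1 ^ p \<le> 1/16"
  proof -
    have "b * (1 + 2 ^ p) * 1 ^ p = b * (1 + 2 ^ p)" by simp
    also have "\<dots> \<le> (2 * real p / fact (p + 1)) * (1 + 2 ^ p)"
      using b1 by (rule mult_right_mono) simp
    also have "\<dots> \<le> 1/16" using fa_r factpos by (simp add: field_simps)
    finally show ?thesis .
  qed
  have C4: "2 * b * (2 * real p * pi * (1 / (8 * real p))) ^ p \<le> 1/16"
  proof -
    have "(2 * real p * pi * (1 / (8 * real p))) ^ p = (pi / 4) ^ p" using p by (simp add: field_simps)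
    also have "\<dots> \<le> 1" using pi_less_4 by (intro power_le_one) auto
    finally have "2 * b * (2 * real p * pi * (1 / (8 * real p))) ^ p \<le> 2 * b * 1"
      using b0 by (intro mult_left_mono) auto
    also have "\<dots> \<le> 2 * (2 * real p / fact (p + 1))" using b1 by simp
    also have "\<dots> \<le> 1/16"
    proof -
      have "64 * real p \<le> 32 * real p * (1 + 2 ^ p)"
      proof -
        have "(2::real) \<le> 1 + 2 ^ p" using p by simp
        then show ?thesis using p by (simp add: mult_left_mono)
      qed
      then show ?thesis using fa_r factpos by (simp add: field_simps)
    qed
    finally show ?thesis .
  qed
  show ?thesis
    unfolding params_ok_def pow4 a_def[symmetric] b_def[symmetric]
    using C1 C2 C3 C4 p by simp
qed

lemma T_eq:
  fixes lam C :: real and p :: nat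
  assumes lam: "lam > 0" and C: "C > 0" and p: "p > 0"
  shows "lam powr (-1/2) / 9 *
           min (4 powr (- real p - 5/2))
               (4 powr (- (real p + 3) / 2) * 6 powr (1 / real p) * C powr (- 1 / real p)
                * lam powr (- 1 / real p))
       = Tval p ((1/2) * lam powr (-1/2)) ((C * lam powr (real p / 2 + 1)) powr (1 / real p))"
proof -
  define L where "L = (1/2) * lam powr (-1/2)"
  define \<kappa> where "\<kappa> = (C * lam powr (real p / 2 + 1)) powr (1 / real p)"
  have e1: "lam powr (-1/2) = 2 * L" by (simp add: L_def)
  have e2: "4 powr (- real p - 5/2) = 4 powr (- real p - 2) / 2"
  proof -
    have "4 powr (- real p - 5/2) = 4 powr ((- real p - 2) + (-1/2))"
      by (rule arg_cong[where f="\<lambda>x. 4 powr x"]) simp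
    also have "\<dots> = 4 powr (- real p - 2) * 4 powr (-1/2)" by (rule powr_add)
    finally have "4 powr (- real p - 5/2) = 4 powr (- real p - 2) * 4 powr (-1/2)" .
    moreover have "(4::real) powr (-1/2) = 1 / 2"
    proof -
      have "(4::real) powr (1/2) = 2" by (simp add: powr_half_sqrt)
      then show ?thesis by (simp add: powr_minus_divide)
    qed
    ultimately show ?thesis by simp
  qed
  have e3: "4 powr (- (real p + 3) / 2) = 2 powr (- real p - 3)"
  proof -
    have "(4::real) = 2 powr 2" by simp
    then have "4 powr (- (real p + 3) / 2) = 2 powr (2 * (- (real p + 3) / 2))"
      by (metis powr_powr)
    then show ?thesis by (simp add: algebra_simps)
  qed
  have e4: "lam powr (-1/2) * (C powr (- 1 / real p) * lam powr (- 1 / real p)) = 1 / \<kappa>"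
  proof -
    have "\<kappa> = C powr (1 / real p) * lam powr ((real p / 2 + 1) * (1 / real p))"
      unfolding \<kappa>_def using C lam by (simp add: powr_mult powr_powr)
    also have "(real p / 2 + 1) * (1 / real p) = 1/2 + 1 / real p" using p by (simp add: field_simps)
    finally have k: "\<kappa> = C powr (1 / real p) * lam powr (1/2 + 1 / real p)" .
    have "1 / \<kappa> = inverse (C powr (1 / real p)) * inverse (lam powr (1/2 + 1 / real p))"
      unfolding k by (simp only: divide_inverse mult_1_left inverse_mult_distrib)
    also have "\<dots> = C powr (- (1 / real p)) * lam powr (- (1/2 + 1 / real p))"
      by (simp only: powr_minus)
    also have "lam powr (- (1/2 + 1 / real p)) = lam powr ((-1/2) + (- 1 / real p))"
      by (rule arg_cong[where f="\<lambda>x. lam powr x"]) simp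
    also have "\<dots> = lam powr (-1/2) * lam powr (- 1 / real p)" by (rule powr_add)
    also have "- (1 / real p) = - 1 / real p" by simp
    finally have "1 / \<kappa> = C powr (- 1 / real p) * (lam powr (-1/2) * lam powr (- 1 / real p))" .
    then show ?thesis by (simp only: mult.assoc mult.left_commute)
  qed
  have pos: "0 \<le> lam powr (-1/2) / 9" by simp
  have "lam powr (-1/2) / 9 *
           min (4 powr (- real p - 5/2))
               (4 powr (- (real p + 3) / 2) * 6 powr (1 / real p) * C powr (- 1 / real p)
                * lam powr (- 1 / real p))
      = min (lam powr (-1/2) / 9 * 4 powr (- real p - 5/2))
            (lam powr (-1/2) / 9 * (4 powr (- (real p + 3) / 2) * 6 powr (1 / real p) * C powr (- 1 / real p)
                * lam powr (- 1 / real p)))"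
    using pos by (simp only: min_mult_distrib_left if_True)
  also have "lam powr (-1/2) / 9 * 4 powr (- real p - 5/2) = L * 4 powr (- real p - 2) / 9"
    unfolding e1 e2 by simp
  also have "lam powr (-1/2) / 9 * (4 powr (- (real p + 3) / 2) * 6 powr (1 / real p) * C powr (- 1 / real p)
                * lam powr (- 1 / real p)) = 2 powr (- real p - 3) * 6 powr (1 / real p) / \<kappa> / 9"
  proof -
    have "lam powr (-1/2) / 9 * (4 powr (- (real p + 3) / 2) * 6 powr (1 / real p) * C powr (- 1 / real p)
                * lam powr (- 1 / real p))
        = 2 powr (- real p - 3) * 6 powr (1 / real p) * (lam powr (-1/2) * (C powr (- 1 / real p) * lam powr (- 1 / real p))) / 9"
      unfolding e3 by (simp add: algebra_simps)
    then show ?thesis unfolding e4 by simp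
  qed
  also have "min (L * 4 powr (- real p - 2) / 9) (2 powr (- real p - 3) * 6 powr (1 / real p) / \<kappa> / 9)
      = Tval p L \<kappa>"
    unfolding Tval_def by (simp add: min_divide_distrib_right)
  finally show ?thesis unfolding L_def \<kappa>_def .
qed

lemma params_exist: "p > 0 \<Longrightarrow> \<exists>\<theta> \<alpha> \<gamma>. params_ok p \<theta> \<alpha> \<gamma>"
proof -
  assume p: "p > 0"
  show ?thesis
  proof (cases "p \<ge> 8")
    case True then show ?thesis using ok_large by blast
  next
    case False
    then have "p = 1 \<or> p = 2 \<or> p = 3 \<or> p = 4 \<or> p = 5 \<or> p = 6 \<or> p = 7" using p by auto
    then show ?thesis using ok1 ok2 ok3 ok4 ok5 ok6 ok7 by blast
  qed
qed

theorem corollary4p6: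
  fixes lam C :: real and p :: nat
    and f :: "real \<Rightarrow> complex" and Df :: "nat \<Rightarrow> real \<Rightarrow> complex"
    and phi0 phi1 :: real
  assumes lam_pos: "lam > 0"
    and p_pos: "p \<ge> 1"
    and C_pos: "C > 0"
    and Df0: "\<And>t. t \<in> {0..(1/2) * lam powr (-1/2)} \<Longrightarrow> Df 0 t = f t"
    and Df_deriv: "\<And>k t. k < p \<Longrightarrow> t \<in> {0..(1/2) * lam powr (-1/2)} \<Longrightarrow>
        (Df k has_vector_derivative Df (Suc k) t) (at t within {0..(1/2) * lam powr (-1/2)})"
    and Df_cont: "continuous_on {0..(1/2) * lam powr (-1/2)} (Df p)"
    and f0: "f 0 = 0"
    and bound: "\<And>t. t \<in> {0..(1/2) * lam powr (-1/2)} \<Longrightarrow>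
        norm (Df p t) \<le> C * lam powr (real p / 2 + 1)"
  shows "integral {0..(1/2) * lam powr (-1/2)}
           (\<lambda>t. (cmod (f t - exp (\<i> * complex_of_real (phi1 * t + phi0))))^2)
         \<ge> lam powr (-1/2) / 9 *
           min (4 powr (- real p - 5/2))
               (4 powr (- (real p + 3) / 2) * 6 powr (1 / real p) * C powr (- 1 / real p)
                * lam powr (- 1 / real p))"
proof -
  define L where "L = (1/2) * lam powr (-1/2)"
  define K where "K = C * lam powr (real p / 2 + 1)"
  define \<kappa> where "\<kappa> = K powr (1 / real p)"
  define E where "E = (\<lambda>t::real. exp (\<i> * complex_of_real (phi1 * t + phi0)))"
  have p: "p > 0" using p_pos by simp
  have L: "L > 0" using lam_pos by (simp add: L_def)
  have K: "K > 0" using lam_pos C_pos by (simp add: K_def)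
  have ka: "\<kappa> > 0" using K by (simp add: \<kappa>_def)
  have kap: "\<kappa> ^ p = K"
    using K p by (simp add: \<kappa>_def powr_realpow[symmetric] powr_powr)
  have der: "\<And>k t. k < p \<Longrightarrow> t \<in> {0..L} \<Longrightarrow>
        (Df k has_vector_derivative Df (Suc k) t) (at t within {0..L})"
    using Df_deriv unfolding L_def by blast
  have bnd: "\<And>t. t \<in> {0..L} \<Longrightarrow> norm (Df p t) \<le> K"
    using bound unfolding L_def K_def by blast
  have goalT: "lam powr (-1/2) / 9 *
           min (4 powr (- real p - 5/2))
               (4 powr (- (real p + 3) / 2) * 6 powr (1 / real p) * C powr (- 1 / real p)
                * lam powr (- 1 / real p)) = Tval p L \<kappa>"
    unfolding L_def \<kappa>_def K_def using T_eq[OF lam_pos C_pos p] .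
  define I where "I = integral {0..L} (\<lambda>t. (cmod (Df 0 t - E t))^2)"
  have Ieq: "integral {0..(1/2) * lam powr (-1/2)}
           (\<lambda>t. (cmod (f t - exp (\<i> * complex_of_real (phi1 * t + phi0))))^2) = I"
    unfolding I_def L_def E_def by (rule integral_cong) (simp add: Df0)
  define c where "c = \<i> * complex_of_real phi1"
  have Eder: "(E has_vector_derivative c * E t) (at t within S)" for t S
  proof -
    define F where "F = (\<lambda>z::complex. exp (\<i> * (complex_of_real phi1 * z + complex_of_real phi0)))"
    have "(F has_field_derivative (\<i> * complex_of_real phi1) * F (of_real t)) (at (of_real t))"
      unfolding F_def by (auto intro!: derivative_eq_intros simp: algebra_simps)
    then have "((\<lambda>x. F (of_real x)) has_vector_derivative (\<i> * complex_of_real phi1) * F (of_real t)) (at t within S)"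
      by (rule has_vector_derivative_real_field)
    moreover have FE: "\<And>x. F (of_real x) = E x" by (simp add: F_def E_def)
    ultimately show ?thesis by (simp add: c_def FE)
  qed
  have Enorm: "norm (E t) = 1" for t by (simp add: E_def norm_exp_i_times)
  have Econt: "continuous_on S E" for S
    using Eder by (meson continuous_on_eq_continuous_within has_vector_derivative_continuous)
  have main: "Tval p L \<kappa> \<le> I"
  proof (cases "2 * \<kappa> \<le> \<bar>phi1\<bar> \<and> 2 * real p * pi / L \<le> \<bar>phi1\<bar>")
    case True
    have phi: "\<bar>phi1\<bar> > 0" using True ka by linarith
    define h where "h = pi / \<bar>phi1\<bar>"
    have h: "h > 0" using phi by (simp add: h_def)
    have ph: "real p * h \<le> L / 2"
    proof -
      have "2 * real p * pi \<le> \<bar>phi1\<bar> * L" using True L by (simp add: divide_le_eq)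
      then show ?thesis using phi by (simp add: h_def field_simps)
    qed
    have ehalf: "exp (\<i> * complex_of_real (phi1 * h)) = -1"
    proof (cases "phi1 > 0")
      case True
      then have "phi1 * h = pi" by (simp add: h_def)
      then show ?thesis by simp
    next
      case False
      then have "phi1 * h = - pi" using phi by (simp add: h_def)
      then have "exp (\<i> * complex_of_real (phi1 * h)) = exp (- (\<i> * complex_of_real pi))"
        by simp
      also have "\<dots> = inverse (exp (\<i> * complex_of_real pi))" by (rule exp_minus)
      also have "\<dots> = -1" by simp
      finally show ?thesis .
    qed
    have Eshift: "E (x + h) = - E x" for x
    proof -
      have "E (x + h) = exp (\<i> * complex_of_real (phi1 * x + phi0) + \<i> * complex_of_real (phi1 * h))"
        unfolding E_def by (rule arg_cong[where f=exp]) (simp add: algebra_simps)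
      also have "\<dots> = E x * exp (\<i> * complex_of_real (phi1 * h))" unfolding E_def by (rule exp_add)
      finally show ?thesis using ehalf by simp
    qed
    have q: "K * h ^ p \<le> 2 ^ p * (pi / 4)"
    proof -
      have "K * h ^ p = (\<kappa> * h) ^ p" using kap by (simp add: power_mult_distrib)
      also have "\<dots> \<le> (pi / 2) ^ p"
      proof (rule power_mono)
        have "\<kappa> * h = \<kappa> * pi / \<bar>phi1\<bar>" by (simp add: h_def)
        also have "\<dots> \<le> (\<bar>phi1\<bar> / 2) * pi / \<bar>phi1\<bar>"
          using True ka by (intro divide_right_mono mult_right_mono) auto
        also have "\<dots> = pi / 2" using phi by simp
        finally show "\<kappa> * h \<le> pi / 2" .
      qed (use ka h in simp)
      also have "\<dots> = 2 ^ p * (pi / 4) ^ p" by (simp add: power_mult_distrib[symmetric])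
      also have "(pi / 4) ^ p \<le> (pi / 4) ^ 1"
        using p pi_less_4 by (intro power_decreasing) auto
      finally show ?thesis by simp
    qed
    have q1: "pi / 4 < (1::real)" using pi_less_4 by simp
    have "L * (1 - pi / 4)^2 / 4 \<le> I"
      unfolding I_def using case_ii[OF L p h ph der bnd Econt Eshift Enorm q q1] .
    moreover have "Tval p L \<kappa> \<le> L * (1 - pi / 4)^2 / 4"
    proof -
      have "Tval p L \<kappa> \<le> L * (4 powr (- real p - 2) / 9)" by (rule Tle1)
      also have "4 powr (- real p - 2) / 9 \<le> (1 - pi / 4)^2 / 4"
      proof -
        have "(4::real) ^ 3 \<le> 4 ^ (p + 2)" using p by (intro power_increasing) auto
        then have "4 powr (- real p - 2) \<le> 1 / 64" unfolding pow4 by (simp add: field_simps)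
        moreover have "1 / 12 \<le> 1 - pi / 4" using pi_approx(2) by simp
        then have "(1 / 12)^2 \<le> (1 - pi / 4)^2" by (intro power_mono) auto
        then have "1 / 144 \<le> (1 - pi / 4)^2" by (simp add: power_divide)
        ultimately show ?thesis by linarith
      qed
      then have "L * (4 powr (- real p - 2) / 9) \<le> L * ((1 - pi / 4)^2 / 4)"
        using L by (intro mult_left_mono) auto
      finally show ?thesis by simp
    qed
    ultimately show ?thesis by linarith
  next
    case False
    obtain \<theta> \<alpha> \<gamma> where ok: "params_ok p \<theta> \<alpha> \<gamma>" using params_exist[OF p] by blast
    define Dg where "Dg = (\<lambda>k t. Df k t - c ^ k * E t)"
    have Dg0: "Dg 0 t = Df 0 t - E t" for t by (simp add: Dg_def)
    have derG: "(Dg k has_vector_derivative Dg (Suc k) t) (at t within {0..L})"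
      if "k < p" "t \<in> {0..L}" for k t
    proof -
      have "((\<lambda>t. c ^ k * E t) has_vector_derivative c ^ k * (c * E t)) (at t within {0..L})"
        by (rule has_vector_derivative_mult_right[OF Eder])
      from has_vector_derivative_diff[OF der[OF that] this]
      show ?thesis by (simp add: Dg_def algebra_simps)
    qed
    have bndG: "norm (Dg p t) \<le> \<kappa> ^ p + \<bar>phi1\<bar> ^ p" if "t \<in> {0..L}" for t
    proof -
      have "norm (Dg p t) \<le> norm (Df p t) + norm (c ^ p * E t)"
        unfolding Dg_def by (rule norm_triangle_ineq4)
      also have "norm (c ^ p * E t) = \<bar>phi1\<bar> ^ p"
        by (simp add: c_def norm_mult norm_power Enorm)
      finally show ?thesis using bnd[OF that] kap by simp
    qed
    have g0: "norm (Dg 0 0) = 1"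
    proof -
      have "Df 0 0 = f 0" using Df0 L by (simp add: L_def)
      then show ?thesis by (simp add: Dg0 f0 Enorm)
    qed
    have contG: "continuous_on {0..L} (Dg 0)"
    proof -
      have "\<And>x. x \<in> {0..L} \<Longrightarrow> (Dg 0 has_vector_derivative Dg (Suc 0) x) (at x within {0..L})"
        using derG p by blast
      then show ?thesis
        by (meson continuous_on_eq_continuous_within has_vector_derivative_continuous)
    qed
    have contG2: "continuous_on {0..L} (\<lambda>t. (norm (Dg 0 t))^2)" using contG by (intro continuous_intros)
    define J where "J = (\<lambda>D. integral {0..D} (\<lambda>t. (norm (Dg 0 t))^2))"
    have rG: "1 \<le> aG p * sqrt (J D / D) + bG p * (\<kappa> ^ p + \<bar>phi1\<bar> ^ p) * D ^ p"
      if D: "0 < D" "D \<le> L" for D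
      unfolding J_def
    proof (rule routeG[where Dg=Dg and M="\<kappa> ^ p + \<bar>phi1\<bar> ^ p", OF p D(1)])
      fix m x assume "m < p" "x \<in> {0..D}"
      then show "(Dg m has_vector_derivative Dg (Suc m) x) (at x within {0..D})"
        using D by (intro has_vector_derivative_within_subset[OF derG]) auto
    next
      fix x assume "x \<in> {0..D}"
      then show "norm (Dg p x) \<le> \<kappa> ^ p + \<bar>phi1\<bar> ^ p" using D by (intro bndG) auto
    qed (rule g0)
    have Jmono: "J D \<le> I" if D: "0 < D" "D \<le> L" for D
    proof -
      have "J D \<le> integral {0..L} (\<lambda>t. (norm (Dg 0 t))^2)"
        unfolding J_def using D
        by (intro integral_subset_le integrable_continuous_real continuous_on_subset[OF contG2] contG2) auto
      then show ?thesis by (simp add: I_def Dg0)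
    qed
    have J0: "0 \<le> J D" if D: "0 < D" "D \<le> L" for D
      unfolding J_def using D
      by (intro integral_nonneg integrable_continuous_real continuous_on_subset[OF contG2]) auto
    from ok have pk: "0 \<le> \<theta>" "\<theta> < 1" "0 < \<alpha>" "\<alpha> \<le> 1" "\<gamma> > 0"
      "4 powr (- real p - 2) / 9 \<le> \<alpha> * (1 - \<theta>)^2 / (aG p)^2"
      "2 powr (- real p - 3) * 6 powr (1 / real p) / 9 \<le> \<gamma> * (1 - \<theta>)^2 / (aG p)^2"
      "bG p * (1 + 2 ^ p) * \<gamma> ^ p \<le> \<theta>"
      "2 * bG p * (2 * real p * pi * \<alpha>) ^ p \<le> \<theta>"
      unfolding params_ok_def by auto
    show ?thesis
      by (rule final_case_i[OF aG_pos[OF p] bG_nonneg pk L ka p False rG Jmono J0])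
  qed
  then show ?thesis unfolding Ieq goalT .
qed

end
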